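(* For arbitrary natural numbers $N>n$ and any $r\in\mathcal R_N$, the projection $\chi^r_n:A(r)\to A(p_n(r))$, $(b_1,\dots,b_N)\mapsto(b_1,\dots,b_n)$, is surjective; i.e. for each $a=(a_1,\dots,a_n)\in A(p_n(r))$ there exists $(b_{n+1},\dots,b_N)$ with $(a_1,\dots,a_n,b_{n+1},\dots,b_N)\in A(r)$.
   Context: $\mathcal R_N$ is the set of real symmetric $N\times N$ matrices with zero diagonal, nonnegative entries and $r_{i,k}+r_{k,j}\ge r_{i,j}$; $p_n(r)$ is the upper-left $n\times n$ corner of $r$. For a distance matrix $q$ of order $m$, $A(q)=\{a\in\mathbb R^m: |a_i-a_j|\le q_{i,j}\le a_i+a_j\ \forall i,j\}$. *)

theory Defs
  imports Main "HOL-Library.FuncSet" Complex_Main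
begin

text \<open>Matrices of order N are represented as functions nat => nat => real,
  with indices 0..N-1 (only entries with i, j < N matter).
  Vectors in R^m are functions nat => real, indices 0..m-1.\<close>

definition distmat :: "nat \<Rightarrow> (nat \<Rightarrow> nat \<Rightarrow> real) \<Rightarrow> bool" where
  "distmat N r \<longleftrightarrow>
     (\<forall>i<N. \<forall>j<N. r i j = r j i) \<and>
     (\<forall>i<N. r i i = 0) \<and>
     (\<forall>i<N. \<forall>j<N. r i j \<ge> 0) \<and>
     (\<forall>i<N. \<forall>j<N. \<forall>k<N. r i k + r k j \<ge> r i j)"

definition RN :: "nat \<Rightarrow> (nat \<Rightarrow> nat \<Rightarrow> real) set" where
  "RN N = {r. distmat N r}"

definition pcorner :: "nat \<Rightarrow> (nat \<Rightarrow> nat \<Rightarrow> real) \<Rightarrow> (nat \<Rightarrow> nat \<Rightarrow> real)" where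
  "pcorner n r = (\<lambda>i j. if i < n \<and> j < n then r i j else 0)"

definition Aset :: "nat \<Rightarrow> (nat \<Rightarrow> nat \<Rightarrow> real) \<Rightarrow> (nat \<Rightarrow> real) set" where
  "Aset m q = {a. (\<forall>i. i \<ge> m \<longrightarrow> a i = 0) \<and>
     (\<forall>i<m. \<forall>j<m. \<bar>a i - a j\<bar> \<le> q i j \<and> q i j \<le> a i + a j)}"

end

theory Submission
  imports Defs
begin

lemma step:
  assumes d: "distmat N r" and k: "k < N" and b: "b \<in> Aset k r"
  shows "\<exists>b'\<in>Aset (Suc k) r. \<forall>i<k. b' i = b i"
proof -
  have sym: "\<And>i j. i<N \<Longrightarrow> j<N \<Longrightarrow> r i j = r j i" using d unfolding distmat_def by blast
  have dz: "\<And>i. i<N \<Longrightarrow> r i i = 0" using d unfolding distmat_def by blast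
  have nn: "\<And>i j. i<N \<Longrightarrow> j<N \<Longrightarrow> r i j \<ge> 0" using d unfolding distmat_def by blast
  have tri: "\<And>i j l. i<N \<Longrightarrow> j<N \<Longrightarrow> l<N \<Longrightarrow> r i l + r l j \<ge> r i j" using d unfolding distmat_def by blast
  have b0: "\<And>i. i \<ge> k \<Longrightarrow> b i = 0" and
       bc: "\<And>i j. i<k \<Longrightarrow> j<k \<Longrightarrow> \<bar>b i - b j\<bar> \<le> r i j \<and> r i j \<le> b i + b j"
    using b unfolding Aset_def by auto
  have bpos: "b j \<ge> 0" if "j<k" for j
  proof -
    have "r j j \<le> b j + b j" using bc[OF that that] by simp
    moreover have "r j j = 0" using dz that k by simp
    ultimately show ?thesis by simp
  qed
  define S where "S = (\<lambda>i. \<bar>r i k - b i\<bar>) ` {..<k}"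
  define x where "x = Max (insert 0 S)"
  have fin: "finite (insert 0 S)" unfolding S_def by auto
  have ge: "\<And>i. i<k \<Longrightarrow> \<bar>r i k - b i\<bar> \<le> x" unfolding x_def S_def
    using fin S_def by (intro Max_ge) auto
  have x0: "x \<ge> 0" unfolding x_def using fin by (intro Max_ge) auto
  have le: "x \<le> b j + r j k" if j: "j<k" for j
  proof -
    have "x \<in> insert 0 S" unfolding x_def using fin by (intro Max_in) auto
    then consider "x = 0" | i where "i<k" "x = \<bar>r i k - b i\<bar>" unfolding S_def by auto
    then show ?thesis
    proof cases
      case 1 then show ?thesis using bpos[OF j] nn[of j k] j k by simp
    next
      case 2
      have t1: "r i k \<le> r i j + r j k" using tri[of i k j] 2 j k by linarith
      have t2: "r i j \<le> r i k + r k j" using tri[of i j k] 2 j k by linarith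
      have s: "r k j = r j k" using sym j k by simp
      show ?thesis using bc[OF 2(1) j] t1 t2 s 2(2) by (simp add: abs_le_iff)
    qed
  qed
  define b' where "b' = b(k := x)"
  have "b' \<in> Aset (Suc k) r"
    unfolding Aset_def
  proof (intro CollectI conjI allI impI)
    fix i assume "Suc k \<le> i" then show "b' i = 0" using b0 unfolding b'_def by auto
  next
    fix i j assume i: "i < Suc k" and j: "j < Suc k"
    have "\<bar>b' i - b' j\<bar> \<le> r i j \<and> r i j \<le> b' i + b' j"
    proof (cases "i = k")
      case True
      show ?thesis
      proof (cases "j = k")
        case True then show ?thesis using \<open>i=k\<close> dz k x0 unfolding b'_def by simp
      next
        case False
        then have jk: "j<k" using j by simp
        have s: "r k j = r j k" using sym jk k by simp
        show ?thesis using ge[OF jk] le[OF jk] s True False unfolding b'_def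
          by (auto simp: abs_le_iff)
      qed
    next
      case False
      then have ik: "i<k" using i by simp
      show ?thesis
      proof (cases "j = k")
        case True
        show ?thesis using ge[OF ik] le[OF ik] True False unfolding b'_def
          by (auto simp: abs_le_iff)
      next
        case False
        then have "j<k" using j by simp
        then show ?thesis using bc[OF ik] \<open>i\<noteq>k\<close> False unfolding b'_def by simp
      qed
    qed
    then show "\<bar>b' i - b' j\<bar> \<le> r i j" "r i j \<le> b' i + b' j" by auto
  qed
  moreover have "\<forall>i<k. b' i = b i" unfolding b'_def by simp
  ultimately show ?thesis by blast
qed

lemma ext:
  assumes d: "distmat N r" and b: "b \<in> Aset n r" and nk: "n + m \<le> N"
  shows "\<exists>c\<in>Aset (n + m) r. \<forall>i<n. c i = b i"
  using nk
proof (induction m)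
  case 0 then show ?case using b by auto
next
  case (Suc m)
  then obtain c where c: "c \<in> Aset (n + m) r" "\<forall>i<n. c i = b i" by auto
  from step[OF d _ c(1)] Suc.prems obtain c' where
    "c' \<in> Aset (Suc (n + m)) r" "\<forall>i<n+m. c' i = c i" by auto
  then show ?case using c(2) proof -
    have "\<forall>i<n. c' i = b i" using c(2) \<open>\<forall>i<n+m. c' i = c i\<close> by simp
    then show ?thesis using \<open>c' \<in> Aset (Suc (n + m)) r\<close> by (metis add_Suc_right)
  qed
qed

theorem lemma4:
  fixes N n :: nat and r :: "nat \<Rightarrow> nat \<Rightarrow> real" and a :: "nat \<Rightarrow> real"
  assumes "n < N" and "r \<in> RN N" and "a \<in> Aset n (pcorner n r)"
  shows "\<exists>b \<in> Aset N r. \<forall>i<n. b i = a i"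
proof -
  have a: "a \<in> Aset n r" using assms(3) unfolding Aset_def pcorner_def by auto
  have d: "distmat N r" using assms(2) unfolding RN_def by simp
  from ext[OF d a, of "N - n"] assms(1) show ?thesis by auto
qed

end
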